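(* Let $P,\widehat P$ be transition kernels on finite $\mathcal S\times\mathcal A$, $r:\mathcal S\times\mathcal A\to[0,1]$, $\gamma\in(0,1)$, $n$ a positive integer, $\pi$ a policy, $\overline V=V^\pi_\gamma-(\min_sV^\pi_\gamma(s))\mathbf 1$ and $\ell=\lceil\log_2\log_2(\|\overline V\|_\infty+4)\rceil$. Suppose that for some $\alpha>0$ the elementwise inequalities $$\big|(\widehat P_\pi-P_\pi)\overline V^{\circ2^k}\big|\le\sqrt{\frac{\alpha\,\mathbb V_{P_\pi}[\overline V^{\circ2^k}]}{n}}+\frac{\alpha\,2^k}{n}\big(\|\overline V\|_\infty+1\big)^{2^k}\mathbf 1$$ hold for all $k=0,\dots,\ell$. Then $$\|\widehat V^\pi_\gamma-V^\pi_\gamma\|_\infty\le\frac{4(\ell+1)\alpha}{(1-\gamma)n}\big(\|\overline V\|_\infty+1\big)+\frac{2(\ell+1)}{1-\gamma}\sqrt{\frac{2\alpha(\|\overline V\|_\infty+1)}{n}} .$$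
   Context: $P_\pi(s,s')=\sum_a\pi(a|s)P(s'|s,a)$, $r_\pi(s)=\sum_a\pi(a|s)r(s,a)$; $V^\pi_\gamma=(I-\gamma P_\pi)^{-1}r_\pi$, $\widehat V^\pi_\gamma=(I-\gamma\widehat P_\pi)^{-1}r_\pi$. $x^{\circ m}$ is the elementwise $m$-th power; $|\cdot|$ and $\sqrt{\cdot}$ act elementwise; $\mathbf 1$ all-ones. For $x\in\mathbb R^{\mathcal S}$, $\mathbb V_{P_\pi}[x]\in\mathbb R^{\mathcal S}$ is the next-state variance $\mathbb V_{P_\pi}[x](s)=\sum_{s'}P_\pi(s,s')\big(x(s')-\sum_{s''}P_\pi(s,s'')x(s'')\big)^2=(P_\pi x^{\circ2}-(P_\pi x)^{\circ2})(s)$. *)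

theory Defs
  imports "HOL-Analysis.Analysis"
begin

definition is_kernel :: "('s::finite \<Rightarrow> 'a::finite \<Rightarrow> 's \<Rightarrow> real) \<Rightarrow> bool" where
  "is_kernel P \<longleftrightarrow> (\<forall>s a s'. 0 \<le> P s a s') \<and> (\<forall>s a. (\<Sum>s'\<in>UNIV. P s a s') = 1)"

definition is_policy :: "('s::finite \<Rightarrow> 'a::finite \<Rightarrow> real) \<Rightarrow> bool" where
  "is_policy \<pi> \<longleftrightarrow> (\<forall>s a. 0 \<le> \<pi> s a) \<and> (\<forall>s. (\<Sum>a\<in>UNIV. \<pi> s a) = 1)"

definition Ppi :: "('s::finite \<Rightarrow> 'a::finite \<Rightarrow> 's \<Rightarrow> real) \<Rightarrow> ('s \<Rightarrow> 'a \<Rightarrow> real) \<Rightarrow> real^'s^'s" where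
  "Ppi P \<pi> = (\<chi> s s'. \<Sum>a\<in>UNIV. \<pi> s a * P s a s')"

definition rpi :: "('s::finite \<Rightarrow> 'a::finite \<Rightarrow> real) \<Rightarrow> ('s \<Rightarrow> 'a \<Rightarrow> real) \<Rightarrow> real^'s" where
  "rpi r \<pi> = (\<chi> s. \<Sum>a\<in>UNIV. \<pi> s a * r s a)"

definition Vpi :: "real \<Rightarrow> ('s::finite \<Rightarrow> 'a::finite \<Rightarrow> 's \<Rightarrow> real) \<Rightarrow> ('s \<Rightarrow> 'a \<Rightarrow> real) \<Rightarrow> ('s \<Rightarrow> 'a \<Rightarrow> real) \<Rightarrow> real^'s" where
  "Vpi \<gamma> P \<pi> r = matrix_inv (mat 1 - \<gamma> *\<^sub>R Ppi P \<pi>) *v rpi r \<pi>"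

definition supnorm :: "real^'s::finite \<Rightarrow> real" where
  "supnorm x = Max (range (\<lambda>s. \<bar>x $ s\<bar>))"

definition vpow :: "real^'s::finite \<Rightarrow> nat \<Rightarrow> real^'s" where
  "vpow x m = (\<chi> s. (x $ s) ^ m)"

definition nsvar :: "real^'s::finite^'s \<Rightarrow> real^'s \<Rightarrow> real^'s" where
  "nsvar M x = M *v vpow x 2 - vpow (M *v x) 2"

end

theory Submission
  imports Defs
begin


definition stoch :: "real^'s::finite^'s \<Rightarrow> bool" where
  "stoch A \<longleftrightarrow> (\<forall>i j. 0 \<le> A$i$j) \<and> (\<forall>i. (\<Sum>j\<in>UNIV. A$i$j) = 1)"

lemma mv_nth: "(A *v x) $ i = (\<Sum>j\<in>UNIV. A$i$j * x$j)"
  by (simp add: matrix_vector_mult_def)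

lemma IgA_nth: "((mat 1 - c *\<^sub>R A) *v x) $ i = x$i - c * (A *v x)$i"
proof -
  have "(mat 1 - c *\<^sub>R A) *v x = x - c *\<^sub>R (A *v x)"
    by (simp add: matrix_vector_mult_diff_rdistrib scaleR_matrix_vector_assoc)
  then show ?thesis by simp
qed

lemma stoch_Ppi:
  assumes "is_kernel P" "is_policy \<pi>"
  shows "stoch (Ppi P \<pi>)"
proof -
  have "(\<Sum>j\<in>UNIV. \<Sum>a\<in>UNIV. \<pi> s a * P s a j) = 1" for s
  proof -
    have "(\<Sum>j\<in>UNIV. \<Sum>a\<in>UNIV. \<pi> s a * P s a j) = (\<Sum>a\<in>UNIV. \<pi> s a * (\<Sum>j\<in>UNIV. P s a j))"
      by (subst sum.swap) (simp add: sum_distrib_left)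
    also have "\<dots> = 1" using assms by (simp add: is_kernel_def is_policy_def)
    finally show ?thesis .
  qed
  moreover have "0 \<le> (\<Sum>a\<in>UNIV. \<pi> s a * P s a j)" for s j
    using assms by (auto simp: is_kernel_def is_policy_def intro!: sum_nonneg)
  ultimately show ?thesis by (simp add: stoch_def Ppi_def)
qed

lemma stoch_ge_min:
  assumes "stoch A" "\<forall>j. c \<le> x$j"
  shows "c \<le> (A *v x)$i"
proof -
  have "c = (\<Sum>j\<in>UNIV. A$i$j * c)" using assms(1) by (simp add: stoch_def flip: sum_distrib_right)
  also have "\<dots> \<le> (\<Sum>j\<in>UNIV. A$i$j * x$j)"
    using assms by (auto simp: stoch_def intro!: sum_mono mult_left_mono)
  finally show ?thesis by (simp add: mv_nth)
qed

lemma stoch_le_max: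
  assumes "stoch A" "\<forall>j. x$j \<le> c"
  shows "(A *v x)$i \<le> c"
proof -
  have "(\<Sum>j\<in>UNIV. A$i$j * x$j) \<le> (\<Sum>j\<in>UNIV. A$i$j * c)"
    using assms by (auto simp: stoch_def intro!: sum_mono mult_left_mono)
  also have "\<dots> = c" using assms(1) by (simp add: stoch_def flip: sum_distrib_right)
  finally show ?thesis by (simp add: mv_nth)
qed

lemma exists_min_vec: "\<exists>s0. \<forall>s. (x::real^'s::finite)$s0 \<le> x$s"
proof -
  let ?m = "Min (range (\<lambda>s. x$s))"
  have "?m \<in> range (\<lambda>s. x$s)" by (rule Min_in) auto
  then obtain s0 where "x$s0 = ?m" by (metis imageE)
  moreover have "?m \<le> x$s" for s by (rule Min_le) auto
  ultimately show ?thesis by metis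
qed

lemma resolvent_nonneg:
  assumes "stoch A" "0 \<le> \<gamma>" "\<gamma> < 1" "\<forall>i. 0 \<le> ((mat 1 - \<gamma> *\<^sub>R A) *v x)$i"
  shows "0 \<le> x$i"
proof -
  obtain s0 where s0: "\<forall>s. x$s0 \<le> x$s" using exists_min_vec by blast
  have "x$s0 \<le> (A *v x)$s0" using stoch_ge_min[OF assms(1)] s0 by blast
  moreover have "0 \<le> x$s0 - \<gamma> * (A *v x)$s0" using assms(4) by (simp add: IgA_nth)
  moreover have "\<gamma> * x$s0 \<le> \<gamma> * (A *v x)$s0" using calculation(1) assms(2) by (rule mult_left_mono)
  ultimately have "0 \<le> (1 - \<gamma>) * x$s0" by (simp add: algebra_simps)
  then have "0 \<le> x$s0" using assms(3) by (simp add: zero_le_mult_iff)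
  then show ?thesis using s0 by (meson order_trans)
qed

lemma resolvent_inv:
  assumes "stoch A" "0 \<le> \<gamma>" "\<gamma> < 1"
  defines "M \<equiv> matrix_inv (mat 1 - \<gamma> *\<^sub>R A)"
  shows "M ** (mat 1 - \<gamma> *\<^sub>R A) = mat 1" "(mat 1 - \<gamma> *\<^sub>R A) ** M = mat 1"
proof -
  have "\<forall>x. (mat 1 - \<gamma> *\<^sub>R A) *v x = 0 \<longrightarrow> x = 0"
  proof (intro allI impI)
    fix x assume h: "(mat 1 - \<gamma> *\<^sub>R A) *v x = 0"
    have "0 \<le> x$i" for i using resolvent_nonneg[OF assms(1-3), of x] h by simp
    moreover have "0 \<le> (-x)$i" for i using resolvent_nonneg[OF assms(1-3), of "-x"] h
      by (simp add: matrix_vector_mult_diff_distrib[of _ 0 x, simplified])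
    ultimately show "x = 0" by (simp add: vec_eq_iff) (meson antisym neg_0_le_iff_le)
  qed
  then have "invertible (mat 1 - \<gamma> *\<^sub>R A)"
    using matrix_left_invertible_ker invertible_left_inverse by blast
  then have "(mat 1 - \<gamma> *\<^sub>R A) ** M = mat 1 \<and> M ** (mat 1 - \<gamma> *\<^sub>R A) = mat 1"
    unfolding M_def matrix_inv_def invertible_def by (rule someI_ex)
  then show "M ** (mat 1 - \<gamma> *\<^sub>R A) = mat 1" "(mat 1 - \<gamma> *\<^sub>R A) ** M = mat 1" by auto
qed



lemma sqrt_sum_le:
  assumes "finite A" "\<forall>i\<in>A. 0 \<le> f i"
  shows "sqrt (sum f A) \<le> (\<Sum>i\<in>A. sqrt (f i))"
  using assms
proof (induction A rule: finite_induct)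
  case empty then show ?case by simp
next
  case (insert a A)
  have "sqrt (sum f (insert a A)) = sqrt (f a + sum f A)" using insert by simp
  also have "\<dots> \<le> sqrt (f a) + sqrt (sum f A)"
    using insert by (intro sqrt_add_le_add_sqrt) (auto intro: sum_nonneg)
  also have "\<dots> \<le> sqrt (f a) + (\<Sum>i\<in>A. sqrt (f i))" using insert by simp
  finally show ?case using insert by simp
qed

lemma t_sqrt_powr:
  assumes "0 \<le> (t::real)"
  shows "t * sqrt (t powr (2 - 1/2^j)) = t powr (2 - 1/2^(Suc j))"
proof (cases "t = 0")
  case True then show ?thesis by simp
next
  case False
  then have tp: "0 < t" using assms by simp
  have "sqrt (t powr (2 - 1/2^j)) = t powr ((2 - 1/2^j)/2)"
    using powr_half_sqrt_powr[of t "2 - 1/2^j"] assms by simp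
  then have "t * sqrt (t powr (2 - 1/2^j)) = t powr (1 + (2 - 1/2^j)/2)"
    using tp by (simp add: powr_add)
  also have "1 + (2 - 1/2^j)/2 = (2 - 1/2^(Suc j)::real)" by (simp add: field_simps)
  finally show ?thesis .
qed

lemma scalar_rec:
  fixes v :: "nat \<Rightarrow> real"
  assumes t: "0 \<le> t" "t^2 \<le> Q" and v0: "\<forall>k. 0 \<le> v k"
    and rec: "\<forall>k<L. v k \<le> sqrt (2^(k+1)) * Q + t * sqrt (v (Suc k))"
    and vL: "v L \<le> t"
  shows "j \<le> L \<Longrightarrow> v (L - j) \<le> Q * (\<Sum>i\<in>{L-j..<L}. 2 powr (real (i+1) / 2^(i+1-(L-j)))) + t powr (2 - 1/2^j)"
proof (induction j)
  case 0
  then show ?case using vL t by (cases "t = 0") simp_all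
next
  case (Suc j)
  define k where "k = L - Suc j"
  have kL: "k < L" and Lk: "L - j = Suc k" using Suc.prems by (auto simp: k_def)
  have Q0: "0 \<le> Q" using t by (meson order_trans zero_le_power2)
  define F1 where "F1 = (\<Sum>i\<in>{Suc k..<L}. 2 powr (real (i+1) / 2^(i+1-Suc k)))"
  define T1 where "T1 = t powr (2 - 1/2^j)"
  have F10: "0 \<le> F1" unfolding F1_def by (intro sum_nonneg) simp
  have T10: "0 \<le> T1" unfolding T1_def by simp
  have IH: "v (Suc k) \<le> Q * F1 + T1" using Suc Lk unfolding F1_def T1_def by simp
  have "sqrt (v (Suc k)) \<le> sqrt (Q * F1 + T1)" using IH by simp
  also have "\<dots> \<le> sqrt (Q * F1) + sqrt T1"
    using Q0 F10 T10 by (intro sqrt_add_le_add_sqrt) auto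
  finally have s1: "t * sqrt (v (Suc k)) \<le> t * sqrt (Q * F1) + t * sqrt T1"
    using t(1) by (metis distrib_left mult_left_mono)
  have "t * sqrt (Q * F1) = (sqrt (t^2) * sqrt Q) * sqrt F1"
    using t(1) by (simp add: real_sqrt_mult)
  also have "\<dots> \<le> (sqrt Q * sqrt Q) * sqrt F1"
    using t Q0 F10 real_le_rsqrt by (intro mult_right_mono mult_right_mono) auto
  also have "\<dots> = Q * sqrt F1" using Q0 by simp
  finally have s2: "t * sqrt (Q * F1) \<le> Q * sqrt F1" .
  have "sqrt F1 \<le> (\<Sum>i\<in>{Suc k..<L}. sqrt (2 powr (real (i+1) / 2^(i+1-Suc k))))"
    unfolding F1_def by (intro sqrt_sum_le) auto
  also have "\<dots> = (\<Sum>i\<in>{Suc k..<L}. 2 powr (real (i+1) / 2^(i+1-k)))"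
  proof (intro sum.cong refl)
    fix i assume "i \<in> {Suc k..<L}"
    then have "i + 1 - k = Suc (i + 1 - Suc k)" by auto
    then have "(2::real)^(i+1-k) = 2 * 2^(i+1-Suc k)" by simp
    then show "sqrt (2 powr (real (i+1) / 2^(i+1-Suc k))) = 2 powr (real (i+1) / 2^(i+1-k))"
      by (simp add: powr_half_sqrt_powr[symmetric] field_simps)
  qed
  finally have s3: "sqrt F1 \<le> (\<Sum>i\<in>{Suc k..<L}. 2 powr (real (i+1) / 2^(i+1-k)))" .
  have s4: "t * sqrt T1 = t powr (2 - 1/2^(Suc j))" unfolding T1_def using t_sqrt_powr t(1) by blast
  have s5: "sqrt (2^(k+1)) = (2::real) powr (real (k+1) / 2^(k+1-k))"
  proof -
    have "(2::real)^(k+1) = 2 powr (real (k+1))" using powr_realpow[of 2 "k+1"] by simp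
    then have "sqrt (2^(k+1)) = sqrt ((2::real) powr (real (k+1)))" by simp
    also have "\<dots> = 2 powr (real (k+1) / 2)" by (simp add: powr_half_sqrt_powr)
    finally show ?thesis by simp
  qed
  have sumsplit: "(\<Sum>i\<in>{k..<L}. 2 powr (real (i+1) / 2^(i+1-k))) =
      2 powr (real (k+1) / 2^(k+1-k)) + (\<Sum>i\<in>{Suc k..<L}. 2 powr (real (i+1) / 2^(i+1-k)))"
    using kL by (subst sum.atLeast_Suc_lessThan) auto
  have "v k \<le> sqrt (2^(k+1)) * Q + t * sqrt (v (Suc k))" using rec kL by blast
  also have "\<dots> \<le> sqrt (2^(k+1)) * Q + Q * (\<Sum>i\<in>{Suc k..<L}. 2 powr (real (i+1) / 2^(i+1-k))) + t powr (2 - 1/2^(Suc j))"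
    using s1 s2 s3 s4 Q0 by (smt (verit) mult_left_mono)
  also have "\<dots> = Q * (\<Sum>i\<in>{k..<L}. 2 powr (real (i+1) / 2^(i+1-k))) + t powr (2 - 1/2^(Suc j))"
    unfolding sumsplit s5 by (simp add: algebra_simps)
  finally show ?case unfolding k_def by simp
qed



lemma two_m_le: "m \<ge> 1 \<Longrightarrow> 2 * m \<le> (2::nat)^m"
proof (induction m)
  case 0 then show ?case by simp
next
  case (Suc m) then show ?case by (cases "m = 0") auto
qed

lemma coef_le: "(2::real) powr (real (i+1) / 2^(i+1)) \<le> sqrt 2"
proof -
  have "2 * (i+1) \<le> (2::nat)^(i+1)" by (rule two_m_le) simp
  then have "real (2 * (i+1)) \<le> real ((2::nat)^(i+1))" by linarith
  then have "real (i+1) / 2^(i+1) \<le> 1/2" by (simp add: field_simps)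
  then have "(2::real) powr (real (i+1) / 2^(i+1)) \<le> 2 powr (1/2)" by (intro powr_mono) auto
  then show ?thesis by (simp add: powr_half_sqrt)
qed

lemma tail_le:
  assumes t: "0 \<le> (t::real)" and b: "0 < \<beta>" "\<beta> \<le> 1" and bp: "(1/\<beta>) powr \<epsilon> \<le> 2"
    and e: "0 \<le> \<epsilon>" "\<epsilon> \<le> 1"
  shows "t powr (2 - \<epsilon>) \<le> 2 * (t * sqrt \<beta> + t^2)"
proof (cases "t = 0")
  case True then show ?thesis by simp
next
  case False
  then have tp: "0 < t" using t by simp
  have sb: "\<beta> \<le> sqrt \<beta>"
  proof -
    have "\<beta> = sqrt \<beta> * sqrt \<beta>" using b by simp
    also have "\<dots> \<le> sqrt \<beta> * 1" using b by (intro mult_left_mono) auto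
    finally show ?thesis by simp
  qed
  have key: "t powr (1 - \<epsilon>) \<le> 2 * (t + sqrt \<beta>)"
  proof (cases "\<beta> \<le> t")
    case True
    have A: "t powr (1 - \<epsilon>) = t * (1 / t powr \<epsilon>)" using tp
      by (simp add: powr_diff)
    have B: "1 / t powr \<epsilon> \<le> (1/\<beta>) powr \<epsilon>"
    proof -
      have "\<beta> powr \<epsilon> \<le> t powr \<epsilon>" using True b e by (intro powr_mono2) auto
      then have "1 / t powr \<epsilon> \<le> 1 / \<beta> powr \<epsilon>" using b tp by (intro divide_left_mono) auto
      then show ?thesis using b by (simp add: powr_divide)
    qed
    then have "t * (1 / t powr \<epsilon>) \<le> t * 2" using bp tp by (intro mult_left_mono) auto
    then show ?thesis using A b by (smt (verit) real_sqrt_ge_zero)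
  next
    case False
    have "t powr (1 - \<epsilon>) \<le> \<beta> powr (1 - \<epsilon>)" using False tp e by (intro powr_mono2) auto
    also have "\<dots> = \<beta> * (1/\<beta>) powr \<epsilon>" using b by (simp add: powr_diff powr_divide)
    also have "\<dots> \<le> \<beta> * 2" using b bp by (intro mult_left_mono) auto
    finally have "t powr (1 - \<epsilon>) \<le> \<beta> * 2" .
    then show ?thesis using sb tp by simp
  qed
  have "t powr (2 - \<epsilon>) = t powr (1 + (1 - \<epsilon>))" by simp
  also have "\<dots> = t * t powr (1 - \<epsilon>)" using tp powr_add[of t 1 "1 - \<epsilon>"] by simp
  also have "\<dots> \<le> t * (2 * (t + sqrt \<beta>))" using key tp by (intro mult_left_mono) auto
  also have "\<dots> = 2 * (t * sqrt \<beta> + t^2)" by (simp add: algebra_simps power2_eq_square)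
  finally show ?thesis .
qed

lemma scalar_final:
  fixes v :: "nat \<Rightarrow> real"
  assumes t: "0 \<le> t" and b: "0 < \<beta>" "\<beta> \<le> 1" and bp: "(1/\<beta>) powr (1/2^L) \<le> 2"
    and Qd: "Q = t * sqrt \<beta> + t^2" and v0: "\<forall>k. 0 \<le> v k"
    and rec: "\<forall>k<L. v k \<le> sqrt (2^(k+1)) * Q + t * sqrt (v (Suc k))"
    and vL: "v L \<le> t"
  shows "v 0 \<le> (sqrt 2 * real L + 2) * Q"
proof -
  have Q0: "0 \<le> Q" using Qd t b by simp
  have tQ: "t^2 \<le> Q" using Qd t b by simp
  have "v (L - L) \<le> Q * (\<Sum>i\<in>{L-L..<L}. 2 powr (real (i+1) / 2^(i+1-(L-L)))) + t powr (2 - 1/2^L)"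
    by (rule scalar_rec[OF t tQ v0 rec vL]) simp
  then have h: "v 0 \<le> Q * (\<Sum>i\<in>{0..<L}. 2 powr (real (i+1) / 2^(i+1))) + t powr (2 - 1/2^L)" by simp
  have "(\<Sum>i\<in>{0..<L}. 2 powr (real (i+1) / 2^(i+1))) \<le> (\<Sum>i\<in>{0..<L}. sqrt 2)"
    by (intro sum_mono coef_le)
  then have h1: "Q * (\<Sum>i\<in>{0..<L}. 2 powr (real (i+1) / 2^(i+1))) \<le> Q * (sqrt 2 * real L)"
    using Q0 by (intro mult_left_mono) (auto simp: mult.commute)
  have "(1::real) / 2^L \<le> 1" by simp
  then have h2: "t powr (2 - 1/2^L) \<le> 2 * Q" using tail_le[OF t b bp] Qd by simp
  show ?thesis using h h1 h2 by (simp add: algebra_simps)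
qed



definition nnrow :: "real^'s::finite^'s \<Rightarrow> real \<Rightarrow> bool" where
  "nnrow M \<rho> \<longleftrightarrow> (\<forall>i j. 0 \<le> M$i$j) \<and> (\<forall>i. (\<Sum>j\<in>UNIV. M$i$j) = \<rho>)"

lemma stoch_nnrow: "stoch A \<Longrightarrow> nnrow A 1"
  by (simp add: stoch_def nnrow_def)

lemma nn_mono:
  assumes "nnrow M \<rho>" "\<forall>j. x$j \<le> y$j"
  shows "(M *v x)$i \<le> (M *v y)$i"
  using assms by (auto simp: nnrow_def mv_nth intro!: sum_mono mult_left_mono)

lemma nn_ge0:
  assumes "nnrow M \<rho>" "\<forall>j. 0 \<le> x$j"
  shows "0 \<le> (M *v x)$i"
  using assms by (auto simp: nnrow_def mv_nth intro!: sum_nonneg)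

lemma nn_const_le:
  assumes "nnrow M \<rho>" "\<forall>j. x$j \<le> c"
  shows "(M *v x)$i \<le> \<rho> * c"
proof -
  have "(\<Sum>j\<in>UNIV. M$i$j * x$j) \<le> (\<Sum>j\<in>UNIV. M$i$j * c)"
    using assms by (auto simp: nnrow_def intro!: sum_mono mult_left_mono)
  also have "\<dots> = \<rho> * c" using assms(1) by (simp add: nnrow_def flip: sum_distrib_right)
  finally show ?thesis by (simp add: mv_nth)
qed

lemma nn_abs:
  assumes "nnrow M \<rho>"
  shows "\<bar>(M *v x)$i\<bar> \<le> (M *v (\<chi> j. \<bar>x$j\<bar>))$i"
proof -
  have "\<bar>\<Sum>j\<in>UNIV. M$i$j * x$j\<bar> \<le> (\<Sum>j\<in>UNIV. \<bar>M$i$j * x$j\<bar>)" by (rule sum_abs)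
  also have "\<dots> = (\<Sum>j\<in>UNIV. M$i$j * \<bar>x$j\<bar>)" using assms by (simp add: nnrow_def abs_mult)
  finally show ?thesis by (simp add: mv_nth)
qed

lemma CS_weights:
  fixes w y :: "'a \<Rightarrow> real"
  assumes "\<forall>j\<in>I. 0 \<le> w j"
  shows "(\<Sum>j\<in>I. w j * y j)^2 \<le> (\<Sum>j\<in>I. w j) * (\<Sum>j\<in>I. w j * (y j)^2)"
proof -
  have "(\<Sum>j\<in>I. sqrt (w j) * (sqrt (w j) * y j))^2 \<le> (\<Sum>j\<in>I. (sqrt (w j))^2) * (\<Sum>j\<in>I. (sqrt (w j) * y j)^2)"
    by (rule Cauchy_Schwarz_ineq_sum)
  moreover have "(\<Sum>j\<in>I. sqrt (w j) * (sqrt (w j) * y j)) = (\<Sum>j\<in>I. w j * y j)"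
    using assms by (intro sum.cong refl) (simp add: mult.assoc[symmetric])
  moreover have "(\<Sum>j\<in>I. (sqrt (w j))^2) = (\<Sum>j\<in>I. w j)"
    using assms by (intro sum.cong refl) simp
  moreover have "(\<Sum>j\<in>I. (sqrt (w j) * y j)^2) = (\<Sum>j\<in>I. w j * (y j)^2)"
    using assms by (intro sum.cong refl) (simp add: power_mult_distrib)
  ultimately show ?thesis by simp
qed

lemma nn_CS:
  assumes "nnrow M \<rho>"
  shows "((M *v x)$i)^2 \<le> \<rho> * (M *v (\<chi> j. (x$j)^2))$i"
  using CS_weights[of UNIV "\<lambda>j. M$i$j" "\<lambda>j. x$j"] assms by (simp add: nnrow_def mv_nth)

lemma resolvent_nnrow:
  assumes "stoch A" "0 \<le> \<gamma>" "\<gamma> < 1"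
  shows "nnrow (matrix_inv (mat 1 - \<gamma> *\<^sub>R A)) (1/(1-\<gamma>))"
proof -
  define M where "M = matrix_inv (mat 1 - \<gamma> *\<^sub>R A)"
  note inv = resolvent_inv[OF assms, folded M_def]
  have "0 \<le> M$i$j" for i j
  proof -
    define x where "x = M *v axis j 1"
    have "(mat 1 - \<gamma> *\<^sub>R A) *v x = axis j 1"
      unfolding x_def by (simp add: matrix_vector_mul_assoc inv(2))
    then have "0 \<le> x$i" using resolvent_nonneg[OF assms, of x] by (simp add: axis_def)
    moreover have "x$i = M$i$j" unfolding x_def mv_nth by (simp add: axis_def if_distrib cong: if_cong)
    ultimately show ?thesis by simp
  qed
  moreover have "(\<Sum>j\<in>UNIV. M$i$j) = 1/(1-\<gamma>)" for i
  proof -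
    have one: "(mat 1 - \<gamma> *\<^sub>R A) *v 1 = (1-\<gamma>) *\<^sub>R 1"
    proof -
      have "(A *v 1)$s = 1" for s using assms(1) by (simp add: stoch_def mv_nth)
      then have "((mat 1 - \<gamma> *\<^sub>R A) *v 1)$s = 1 - \<gamma>" for s
      proof -
        have "((mat 1 - \<gamma> *\<^sub>R A) *v 1)$s = (1::real^'a)$s - \<gamma> * (A *v 1)$s" by (rule IgA_nth)
        then show ?thesis using \<open>\<And>s. (A *v 1)$s = 1\<close> by simp
      qed
      then show ?thesis by (simp add: vec_eq_iff)
    qed
    have "M *v ((mat 1 - \<gamma> *\<^sub>R A) *v 1) = 1" by (simp add: matrix_vector_mul_assoc inv(1))
    then have "(1-\<gamma>) *\<^sub>R (M *v 1) = 1" by (simp add: one matrix_vector_mult_scaleR)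
    then have "((1-\<gamma>) *\<^sub>R (M *v 1))$i = 1" by simp
    then have "(1-\<gamma>) * (M *v 1)$i = 1" by simp
    then have "(M *v 1)$i = 1/(1-\<gamma>)" using assms by (simp add: field_simps)
    then show ?thesis by (simp add: mv_nth)
  qed
  ultimately show ?thesis unfolding nnrow_def M_def by blast
qed

lemma resolvent_id:
  assumes "stoch A" "0 \<le> \<gamma>" "\<gamma> < 1"
  shows "\<gamma> *\<^sub>R (matrix_inv (mat 1 - \<gamma> *\<^sub>R A) *v (A *v y)) = matrix_inv (mat 1 - \<gamma> *\<^sub>R A) *v y - y"
proof -
  define M where "M = matrix_inv (mat 1 - \<gamma> *\<^sub>R A)"
  note inv = resolvent_inv[OF assms, folded M_def]
  have "(mat 1 - \<gamma> *\<^sub>R A) *v y = y - \<gamma> *\<^sub>R (A *v y)"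
    by (simp add: matrix_vector_mult_diff_rdistrib scaleR_matrix_vector_assoc)
  moreover have "M *v ((mat 1 - \<gamma> *\<^sub>R A) *v y) = y" by (simp add: matrix_vector_mul_assoc inv(1))
  ultimately have "M *v y - \<gamma> *\<^sub>R (M *v (A *v y)) = y"
    by (simp add: matrix_vector_mult_diff_distrib matrix_vector_mult_scaleR)
  then show ?thesis unfolding M_def by (simp add: algebra_simps)
qed

lemma pow_diff_le:
  fixes a b :: real
  assumes "0 \<le> b" "b \<le> a"
  shows "a^N - b^N \<le> real N * a^(N-1) * (a - b)"
proof (induction N)
  case 0 then show ?case by simp
next
  case (Suc N)
  have a0: "0 \<le> a" using assms by simp
  have "a^(Suc N) - b^(Suc N) = a * (a^N - b^N) + b^N * (a - b)" by (simp add: algebra_simps)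
  also have "\<dots> \<le> a * (real N * a^(N-1) * (a - b)) + a^N * (a - b)"
    using Suc a0 assms by (intro add_mono mult_left_mono mult_right_mono power_mono) auto
  also have "\<dots> = real (Suc N) * a^(Suc N - 1) * (a - b)"
    by (cases N) (simp_all add: algebra_simps)
  finally show ?case .
qed

lemma pow_gap:
  fixes a b B :: real
  assumes "0 \<le> a" "a \<le> B" "0 \<le> b" "a - b \<le> 1"
  shows "a^N - b^N \<le> real N * B^(N-1)"
proof (cases "b \<le> a")
  case True
  have "a^N - b^N \<le> real N * a^(N-1) * (a - b)" by (rule pow_diff_le) (use assms True in auto)
  also have "\<dots> \<le> real N * B^(N-1) * 1"
    using assms True by (intro mult_mono mult_left_mono power_mono) auto
  finally show ?thesis by simp
next
  case False
  then have "a^N \<le> b^N" using assms by (intro power_mono) auto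
  moreover have "0 \<le> real N * B^(N-1)" using assms by simp
  ultimately show ?thesis by linarith
qed



lemma rec_alg:
  fixes \<gamma> t B W W' c X N :: real
  assumes g: "0<\<gamma>" "\<gamma><1" and t: "0\<le>t" and B: "0\<le>B" and W: "0\<le>W" "0\<le>W'" and N: "0\<le>N" and X: "X>0"
    and c0: "0 \<le> c" and cle: "c \<le> N * X^2/(B+1)"
    and h: "(\<gamma>*W)^2 \<le> \<gamma>/(1-\<gamma>) * (c/(1-\<gamma>) + \<gamma>*(t*W' + t^2*N*X^2/(1-\<gamma>)))"
  shows "t*\<gamma>*(1-\<gamma>)*W/X \<le> sqrt N * (t * sqrt(1/(B+1)) + t^2) + t * sqrt(t*\<gamma>*(1-\<gamma>)*W'/X^2)"
proof -
  define u where "u = t*\<gamma>*(1-\<gamma>)*W/X"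
  define v' where "v' = t*\<gamma>*(1-\<gamma>)*W'/X^2"
  define Q where "Q = t * sqrt(1/(B+1)) + t^2"
  have u0: "0 \<le> u" unfolding u_def using g t W X by simp
  have v0: "0 \<le> v'" unfolding v'_def using g t W X by simp
  have Q0: "0 \<le> Q" unfolding Q_def using t B by simp
  have X2: "0 < X^2" using X by simp
  have "u^2 = (t^2*(1-\<gamma>)^2/X^2) * (\<gamma>*W)^2" unfolding u_def by (simp add: power_mult_distrib power_divide)
  also have "\<dots> \<le> (t^2*(1-\<gamma>)^2/X^2) * (\<gamma>/(1-\<gamma>) * (c/(1-\<gamma>) + \<gamma>*(t*W' + t^2*N*X^2/(1-\<gamma>))))"
    using h X2 by (intro mult_left_mono) auto
  also have "\<dots> = t^2*\<gamma>*(c/X^2) + t^2*\<gamma>* v' + t^4*\<gamma>^2*N"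
  proof -
    define a where "a = 1 - \<gamma>"
    have a: "0 < a" using g by (simp add: a_def)
    have "(t^2*a^2/X^2) * (\<gamma>/a * (c/a + \<gamma>*(t*W' + t^2*N*X^2/a))) = t^2*\<gamma>*(c/X^2) + t^2*\<gamma>*(t*\<gamma>*a*W'/X^2) + t^4*\<gamma>^2*N"
      using a X by (simp add: field_simps power2_eq_square power4_eq_xxxx)
    then show ?thesis unfolding v'_def a_def .
  qed
  also have "\<dots> \<le> t^2*(N/(B+1)) + t^2* v' + t^4*N"
  proof -
    have "c/X^2 \<le> N/(B+1)" using cle X2 B by (simp add: field_simps)
    then have a: "t^2*\<gamma>*(c/X^2) \<le> t^2*1*(N/(B+1))"
      using g t B N c0 X2 by (intro mult_mono mult_left_mono) auto
    have b: "t^2*\<gamma>* v' \<le> t^2*1* v'" using g v0 by (intro mult_right_mono mult_left_mono) auto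
    have "\<gamma>^2 \<le> 1" using g by (simp add: power_le_one)
    then have c: "t^4*\<gamma>^2*N \<le> t^4*1*N" using N by (intro mult_right_mono mult_left_mono) auto
    show ?thesis using a b c by simp
  qed
  also have "\<dots> \<le> N*Q^2 + t^2* v'"
  proof -
    have "t^2*(1/(B+1)) + t^4 \<le> Q^2"
      unfolding Q_def using t B by (simp add: power2_sum power_mult_distrib real_sqrt_pow2 power2_eq_square[of "t^2"] field_simps)
    then have "N*(t^2*(1/(B+1)) + t^4) \<le> N*Q^2" using N by (rule mult_left_mono)
    then show ?thesis by (simp add: field_simps)
  qed
  finally have u2: "u^2 \<le> N*Q^2 + t^2* v'" .
  have "u = sqrt (u^2)" using u0 by simp
  also have "\<dots> \<le> sqrt (N*Q^2 + t^2* v')" using u2 by (rule real_sqrt_le_mono)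
  also have "\<dots> \<le> sqrt (N*Q^2) + sqrt (t^2* v')" using N v0 by (intro sqrt_add_le_add_sqrt) auto
  also have "\<dots> = sqrt N * Q + t * sqrt v'" using Q0 t by (simp add: real_sqrt_mult)
  finally show ?thesis unfolding u_def v'_def Q_def .
qed

lemma beta_bound:
  fixes B :: real and L :: nat
  assumes B: "0 \<le> B" and L: "L = nat \<lceil>log 2 (log 2 (B + 4))\<rceil>"
  shows "(1/(1/(B+1))) powr (1/2^L) \<le> 2"
proof -
  have l1: "2 \<le> log 2 (B+4)" using B by (simp add: le_log_iff)
  then have "log 2 (log 2 (B+4)) \<le> real L" using L by linarith
  then have "log 2 (B+4) \<le> 2 powr real L" using l1 by (simp add: log_le_iff)
  then have l2: "log 2 (B+4) \<le> 2^L" by (simp add: powr_realpow)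
  have "(1/(1/(B+1))) powr (1/2^L) = (B+1) powr (1/2^L)" by simp
  also have "\<dots> \<le> (B+4) powr (1/2^L)" using B by (intro powr_mono2) auto
  also have "\<dots> \<le> (B+4) powr (1/log 2 (B+4))"
    using B l1 l2 by (intro powr_mono) (auto simp: field_simps)
  also have "\<dots> = 2"
  proof -
    have "ln (B+4) > 0" using B by simp
    then show ?thesis using B by (simp add: powr_def log_def)
  qed
  finally show ?thesis .
qed



lemma fmax_ge: "(f::'s::finite \<Rightarrow> real) s \<le> Max (range f)"
  by (rule Max_ge) auto

lemma fmax_in: "\<exists>s. Max (range (f::'s::finite \<Rightarrow> real)) = f s"
proof -
  have "Max (range f) \<in> range f" by (rule Max_in) auto
  then show ?thesis by (metis imageE)
qed

lemma fmax_le: "(\<forall>s. (f::'s::finite \<Rightarrow> real) s \<le> c) \<Longrightarrow> Max (range f) \<le> c"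
  using fmax_in[of f] by metis

lemma stoch_shift:
  assumes "stoch A"
  shows "(A *v (x - c *\<^sub>R 1))$i = (A *v x)$i - c"
proof -
  have "(A *v (x - c *\<^sub>R 1))$i = (\<Sum>j\<in>UNIV. A$i$j * x$j - A$i$j * c)"
    by (simp add: mv_nth right_diff_distrib)
  also have "\<dots> = (\<Sum>j\<in>UNIV. A$i$j * x$j) - (\<Sum>j\<in>UNIV. A$i$j * c)"
    by (rule sum_subtractf)
  also have "\<dots> = (A *v x)$i - c * (\<Sum>j\<in>UNIV. A$i$j)"
    by (simp add: mv_nth sum_distrib_left mult.commute)
  also have "\<dots> = (A *v x)$i - c" using assms by (simp add: stoch_def)
  finally show ?thesis .
qed

lemma nn_affine:
  assumes "nnrow M \<rho>"
  shows "(M *v (\<chi> j. a * y$j + b))$i = a * (M *v y)$i + \<rho> * b"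
proof -
  have "(M *v (\<chi> j. a * y$j + b))$i = (\<Sum>j\<in>UNIV. a * (M$i$j * y$j) + M$i$j * b)"
    by (simp add: mv_nth algebra_simps)
  also have "\<dots> = a * (M *v y)$i + b * (\<Sum>j\<in>UNIV. M$i$j)"
    by (simp add: sum.distrib mv_nth sum_distrib_left mult.commute)
  finally show ?thesis using assms by (simp add: nnrow_def mult.commute)
qed

lemma final_alg:
  fixes \<gamma> t B \<alpha> v0 E :: real and n L :: nat
  assumes g: "0<\<gamma>" "\<gamma><1" and B: "0\<le>B" and a: "0<\<alpha>" and n: "0<n" and td: "t = sqrt (\<alpha>/real n)"
    and hv: "v0 \<le> (sqrt 2 * real L + 2) * (t * sqrt(1/(B+1)) + t^2)"
    and he: "E \<le> (B+1)/(1-\<gamma>) * (v0 + t^2)"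
  shows "E \<le> 4 * (real L + 1) * \<alpha> / ((1 - \<gamma>) * real n) * (B + 1)
             + 2 * (real L + 1) / (1 - \<gamma>) * sqrt (2 * \<alpha> * (B + 1) / real n)"
proof -
  have t0: "0 \<le> t" using td a n by simp
  have t2: "t^2 = \<alpha>/real n" using td a n by simp
  have sq: "sqrt (2 * \<alpha> * (B + 1) / real n) = sqrt 2 * t * sqrt (B+1)"
    using td by (simp add: real_sqrt_mult[symmetric] field_simps)
  have sb: "(B+1) * sqrt (1/(B+1)) = sqrt (B+1)"
    using B by (simp add: real_sqrt_divide field_simps)
  have "(B+1) * (v0 + t^2) \<le> (B+1) * ((sqrt 2 * real L + 2) * (t * sqrt(1/(B+1)) + t^2) + t^2)"
    using hv B by (intro mult_left_mono) auto
  also have "\<dots> = (sqrt 2 * real L + 2) * t * sqrt (B+1) + (sqrt 2 * real L + 3) * t^2 * (B+1)"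
  proof -
    have gen: "\<And>b a s t::real. b * (a * (t * s + t^2) + t^2) = a * t * (b * s) + (a + 1) * t^2 * b"
      by (simp add: algebra_simps)
    show ?thesis unfolding gen sb by (simp add: algebra_simps)
  qed
  also have "\<dots> \<le> (2 * sqrt 2 * (real L + 1)) * t * sqrt (B+1) + (4 * (real L + 1)) * t^2 * (B+1)"
  proof -
    have s2: "1 \<le> sqrt 2" "sqrt 2 \<le> 4" by (auto simp: real_le_lsqrt)
    have "0 \<le> sqrt 2 * real L" by simp
    moreover have "2 * sqrt 2 * (real L + 1) = 2*(sqrt 2 * real L) + 2 * sqrt 2" by (simp add: algebra_simps)
    ultimately have "sqrt 2 * real L + 2 \<le> 2 * sqrt 2 * (real L + 1)" using s2 by linarith
    moreover have "sqrt 2 * real L + 3 \<le> 4 * (real L + 1)"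
    proof -
      have "sqrt 2 * real L \<le> 4 * real L" using s2 by (intro mult_right_mono) auto
      then show ?thesis by (simp add: algebra_simps)
    qed
    ultimately show ?thesis using t0 B
      by (intro add_mono mult_right_mono) auto
  qed
  finally have main: "(B+1) * (v0 + t^2) \<le> (2 * sqrt 2 * (real L + 1)) * t * sqrt (B+1) + (4 * (real L + 1)) * t^2 * (B+1)" .
  have "E \<le> ((B+1) * (v0 + t^2)) / (1-\<gamma>)" using he by simp
  also have "\<dots> \<le> ((2 * sqrt 2 * (real L + 1)) * t * sqrt (B+1) + (4 * (real L + 1)) * t^2 * (B+1)) / (1-\<gamma>)"
    using main g by (intro divide_right_mono) auto
  also have "\<dots> = 4 * (real L + 1) * \<alpha> / ((1 - \<gamma>) * real n) * (B + 1)
             + 2 * (real L + 1) / (1 - \<gamma>) * sqrt (2 * \<alpha> * (B + 1) / real n)"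
  proof -
    have nn: "real n > 0" using n by simp
    have g1: "1 - \<gamma> > 0" using g by simp
    have e1: "4 * (real L + 1) * \<alpha> / ((1 - \<gamma>) * real n) * (B + 1) = (4 * (real L + 1)) * (\<alpha> / real n) * (B+1) / (1-\<gamma>)"
      by (simp add: field_simps)
    have e2: "2 * (real L + 1) / (1 - \<gamma>) * (sqrt 2 * t * sqrt (B+1)) = (2 * sqrt 2 * (real L + 1)) * t * sqrt (B+1) / (1-\<gamma>)"
      by (simp add: field_simps)
    show ?thesis unfolding sq e1 e2 t2[symmetric] by (simp add: add_divide_distrib)
  qed
  finally show ?thesis .
qed



theorem mainTheorem16:
  fixes P Phat :: "'s::finite \<Rightarrow> 'a::finite \<Rightarrow> 's \<Rightarrow> real"
    and r :: "'s \<Rightarrow> 'a \<Rightarrow> real" and \<pi> :: "'s \<Rightarrow> 'a \<Rightarrow> real"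
    and \<gamma> \<alpha> :: real and n L :: nat and Vbar :: "real^'s"
  assumes "is_kernel P" and "is_kernel Phat"
    and "\<forall>s a. 0 \<le> r s a \<and> r s a \<le> 1"
    and "0 < \<gamma>" and "\<gamma> < 1" and "0 < n" and "is_policy \<pi>" and "0 < \<alpha>"
    and "Vbar = Vpi \<gamma> P \<pi> r - (Min (range (\<lambda>s. Vpi \<gamma> P \<pi> r $ s))) *\<^sub>R (1::real^'s)"
    and "L = nat \<lceil>log 2 (log 2 (supnorm Vbar + 4))\<rceil>"
    and "\<forall>k\<le>L. \<forall>s.
           \<bar>((Ppi Phat \<pi> - Ppi P \<pi>) *v vpow Vbar (2^k)) $ s\<bar>
             \<le> sqrt (\<alpha> * nsvar (Ppi P \<pi>) (vpow Vbar (2^k)) $ s / real n)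
               + \<alpha> * 2^k / real n * (supnorm Vbar + 1) ^ (2^k)"
  shows "supnorm (Vpi \<gamma> Phat \<pi> r - Vpi \<gamma> P \<pi> r)
           \<le> 4 * (real L + 1) * \<alpha> / ((1 - \<gamma>) * real n) * (supnorm Vbar + 1)
             + 2 * (real L + 1) / (1 - \<gamma>) * sqrt (2 * \<alpha> * (supnorm Vbar + 1) / real n)"
proof -
  note kP = assms(1) and kPh = assms(2) and rb = assms(3) and g0 = assms(4) and g1 = assms(5)
    and n0 = assms(6) and pol = assms(7) and a0 = assms(8) and Vbar_eq = assms(9) and L_eq = assms(10)
    and hyp = assms(11)
  define Pm where "Pm = Ppi P \<pi>"
  define Ph where "Ph = Ppi Phat \<pi>"
  define rv where "rv = rpi r \<pi>"
  define Mp where "Mp = matrix_inv (mat 1 - \<gamma> *\<^sub>R Pm)"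
  define M where "M = matrix_inv (mat 1 - \<gamma> *\<^sub>R Ph)"
  define V where "V = Vpi \<gamma> P \<pi> r"
  define Vh where "Vh = Vpi \<gamma> Phat \<pi> r"
  define m where "m = Min (range (\<lambda>s. V$s))"
  define B where "B = supnorm Vbar"
  define \<rho> where "\<rho> = 1/(1-\<gamma>)"
  define t where "t = sqrt (\<alpha> / real n)"
  have gg: "0 \<le> \<gamma>" using g0 by simp
  have V_eq: "V = Mp *v rv" unfolding V_def Vpi_def Mp_def Pm_def rv_def ..
  have Vh_eq: "Vh = M *v rv" unfolding Vh_def Vpi_def M_def Ph_def rv_def ..
  have sPm: "stoch Pm" unfolding Pm_def using stoch_Ppi kP pol by blast
  have sPh: "stoch Ph" unfolding Ph_def using stoch_Ppi kPh pol by blast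
  have nnPm: "nnrow Pm 1" using sPm by (rule stoch_nnrow)
  have nnPh: "nnrow Ph 1" using sPh by (rule stoch_nnrow)
  have nnMp: "nnrow Mp \<rho>" unfolding Mp_def \<rho>_def using resolvent_nnrow[OF sPm gg g1] .
  have nnM: "nnrow M \<rho>" unfolding M_def \<rho>_def using resolvent_nnrow[OF sPh gg g1] .
  have rho_pos: "0 < \<rho>" unfolding \<rho>_def using g1 by simp
  have t0: "0 \<le> t" unfolding t_def using a0 n0 by simp
  have t2: "t^2 = \<alpha> / real n" unfolding t_def using a0 n0 by simp
  have rv_nth: "rv$s = (\<Sum>a\<in>UNIV. \<pi> s a * r s a)" for s unfolding rv_def rpi_def by simp
  have rv0: "0 \<le> rv$s" for s unfolding rv_nth using pol rb by (auto simp: is_policy_def intro!: sum_nonneg)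
  have rv1: "rv$s \<le> 1" for s
  proof -
    have "(\<Sum>a\<in>UNIV. \<pi> s a * r s a) \<le> (\<Sum>a\<in>UNIV. \<pi> s a * 1)"
      by (intro sum_mono mult_left_mono) (use pol rb in \<open>auto simp: is_policy_def\<close>)
    also have "(\<Sum>a\<in>UNIV. \<pi> s a * 1) = 1" using pol by (simp add: is_policy_def)
    finally show ?thesis unfolding rv_nth .
  qed
  have V_bell: "V$s - \<gamma> * (Pm *v V)$s = rv$s" for s
  proof -
    have "(mat 1 - \<gamma> *\<^sub>R Pm) *v V = rv"
      unfolding V_eq Mp_def by (simp add: matrix_vector_mul_assoc resolvent_inv(2)[OF sPm gg g1])
    then show ?thesis using IgA_nth[of \<gamma> Pm V s] by simp
  qed
  have Vh_bell: "Vh$s - \<gamma> * (Ph *v Vh)$s = rv$s" for s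
  proof -
    have "(mat 1 - \<gamma> *\<^sub>R Ph) *v Vh = rv"
      unfolding Vh_eq M_def by (simp add: matrix_vector_mul_assoc resolvent_inv(2)[OF sPh gg g1])
    then show ?thesis using IgA_nth[of \<gamma> Ph Vh s] by simp
  qed
  have V0: "0 \<le> V$s" for s unfolding V_eq using nn_ge0[OF nnMp] rv0 by blast
  have m_le: "m \<le> V$s" for s unfolding m_def by (rule Min_le) auto
  have m0: "0 \<le> m"
  proof -
    have "m \<in> range (\<lambda>s. V$s)" unfolding m_def by (rule Min_in) auto
    then show ?thesis using V0 by auto
  qed
  have Vbar_V: "Vbar = V - m *\<^sub>R 1" unfolding Vbar_eq V_def m_def ..
  have Vb_nth: "Vbar$s = V$s - m" for s unfolding Vbar_V by simp
  have Vb0: "0 \<le> Vbar$s" for s using m_le[of s] Vb_nth[of s] by simp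
  have VbB: "Vbar$s \<le> B" for s
  proof -
    have "\<bar>Vbar$s\<bar> \<le> B" unfolding B_def supnorm_def by (rule fmax_ge)
    then show ?thesis by simp
  qed
  have B0: "0 \<le> B" using Vb0 VbB by (meson order_trans)
  have shift: "stoch A \<Longrightarrow> (A *v Vbar)$s = (A *v V)$s - m" for A s
    unfolding Vbar_V by (rule stoch_shift)
  have d_le: "Vbar$s - \<gamma> * (Pm *v Vbar)$s \<le> 1" for s
  proof -
    have "Vbar$s - \<gamma> * (Pm *v Vbar)$s = rv$s - (1-\<gamma>) * m"
    proof -
      have "\<gamma> * (Pm *v Vbar)$s = \<gamma> * (Pm *v V)$s - \<gamma> * m"
        using shift[OF sPm, of s] by (simp add: right_diff_distrib)
      then show ?thesis using V_bell[of s] Vb_nth[of s] by (simp add: algebra_simps)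
    qed
    moreover have "0 \<le> (1-\<gamma>) * m" using g1 m0 by simp
    ultimately show ?thesis using rv1[of s] by linarith
  qed
  define g0v where "g0v = (Ph - Pm) *v Vbar"
  have e_eq: "Vh - V = \<gamma> *\<^sub>R (M *v g0v)"
  proof -
    have c1: "(mat 1 - \<gamma> *\<^sub>R Ph) *v (Vh - V) = \<gamma> *\<^sub>R g0v"
    proof (rule iffD2[OF vec_eq_iff], rule allI)
      fix s
      have "((mat 1 - \<gamma> *\<^sub>R Ph) *v (Vh - V))$s = (Vh - V)$s - \<gamma> * (Ph *v (Vh - V))$s" by (rule IgA_nth)
      also have "\<dots> = (Vh$s - \<gamma> * (Ph *v Vh)$s) - V$s + \<gamma> * (Ph *v V)$s"
        by (simp add: matrix_vector_mult_diff_distrib algebra_simps)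
      also have "\<dots> = \<gamma> * ((Ph *v V)$s - (Pm *v V)$s)"
        using Vh_bell[of s] V_bell[of s] by (simp add: algebra_simps)
      also have "\<dots> = (\<gamma> *\<^sub>R g0v)$s"
        unfolding g0v_def using shift[OF sPh, of s] shift[OF sPm, of s]
        by (simp add: matrix_vector_mult_diff_rdistrib)
      finally show "((mat 1 - \<gamma> *\<^sub>R Ph) *v (Vh - V))$s = (\<gamma> *\<^sub>R g0v)$s" .
    qed
    have "Vh - V = M *v ((mat 1 - \<gamma> *\<^sub>R Ph) *v (Vh - V))"
      unfolding M_def by (simp add: matrix_vector_mul_assoc resolvent_inv(1)[OF sPh gg g1])
    also have "\<dots> = \<gamma> *\<^sub>R (M *v g0v)" unfolding c1 by (simp add: matrix_vector_mult_scaleR)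
    finally show ?thesis .
  qed
  define x where "x k = vpow Vbar (2^k)" for k
  have x_nth: "x k $ j = (Vbar$j)^(2^k)" for k j unfolding x_def vpow_def by simp
  have x_sq: "(\<chi> j. (x k $ j)^2) = x (Suc k)" for k
    by (simp add: vec_eq_iff x_nth power_mult[symmetric] mult.commute)
  have x_sq': "vpow (x k) 2 = x (Suc k)" for k using x_sq[of k] by (simp add: vpow_def)
  have x00: "x 0 = Vbar" by (simp add: vec_eq_iff x_nth)
  have x0: "0 \<le> x k $ j" for k j unfolding x_nth using Vb0 by simp
  have xB: "x k $ j \<le> B^(2^k)" for k j unfolding x_nth using Vb0 VbB by (intro power_mono) auto
  define Var where "Var k = nsvar Pm (x k)" for k
  have Var_nth: "Var k $ j = (Pm *v x (Suc k))$j - ((Pm *v x k)$j)^2" for k j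
    unfolding Var_def nsvar_def x_sq' by (simp add: vpow_def)
  have Jsq: "((Pm *v x k)$j)^2 \<le> (Pm *v x (Suc k))$j" for k j
    using nn_CS[OF nnPm, of "x k" j] x_sq[of k] by simp
  have Var0: "0 \<le> Var k $ j" for k j using Jsq[of k j] Var_nth[of k j] by linarith
  have PmVb0: "0 \<le> (Pm *v Vbar)$j" for j using nn_ge0[OF nnPm] Vb0 by blast
  have jensen: "((Pm *v Vbar)$j)^(2^k) \<le> (Pm *v x k)$j" for k j
  proof (induction k)
    case 0 then show ?case by (simp add: x00)
  next
    case (Suc k)
    have "((Pm *v Vbar)$j)^(2^(Suc k)) = (((Pm *v Vbar)$j)^(2^k))^2"
      by (simp add: power_mult[symmetric] mult.commute)
    also have "\<dots> \<le> ((Pm *v x k)$j)^2" using Suc PmVb0[of j] by (intro power_mono) auto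
    also have "\<dots> \<le> (Pm *v x (Suc k))$j" by (rule Jsq)
    finally show ?case .
  qed
  define S where "S k = (\<chi> j. sqrt (Var k $ j))" for k
  have S0: "0 \<le> S k $ j" for k j unfolding S_def using Var0 by simp
  have S_sq: "(\<chi> j. (S k $ j)^2) = Var k" for k by (simp add: vec_eq_iff S_def Var0)
  define W where "W k = Max (range (\<lambda>s. (M *v S k)$s))" for k
  have W_ge: "(M *v S k)$s \<le> W k" for k s unfolding W_def by (rule fmax_ge)
  have W_in: "\<exists>s. W k = (M *v S k)$s" for k unfolding W_def by (rule fmax_in)
  have MS0: "0 \<le> (M *v S k)$s" for k s using nn_ge0[OF nnM] S0 by blast
  have W0: "0 \<le> W k" for k using MS0 W_ge order_trans by blast
  have hyp': "\<bar>((Ph - Pm) *v x k)$s\<bar> \<le> t * S k $ s + t^2 * 2^k * (B+1)^(2^k)" if "k \<le> L" for k s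
  proof -
    have h: "\<bar>((Ph - Pm) *v x k)$s\<bar> \<le> sqrt (\<alpha> * Var k $ s / real n) + \<alpha> * 2^k / real n * (B + 1) ^ (2^k)"
      using hyp that unfolding Ph_def Pm_def x_def Var_def B_def by blast
    have "sqrt (\<alpha> * Var k $ s / real n) = t * S k $ s"
      unfolding t_def S_def by (simp add: real_sqrt_mult[symmetric])
    moreover have "\<alpha> * 2^k / real n * (B + 1) ^ (2^k) = t^2 * 2^k * (B+1)^(2^k)" unfolding t2 by simp
    ultimately show ?thesis using h by simp
  qed
  have KI: "\<gamma> * (M *v Var k)$s \<le> \<rho> * (2^(k+1) * B^(2^(k+1) - 1)) + \<gamma> * (M *v (\<chi> j. \<bar>((Ph - Pm) *v x (Suc k))$j\<bar>))$s" for k s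
  proof -
    define x' where "x' = x (Suc k)"
    define g where "g = (Ph - Pm) *v x'"
    define z where "z = (\<chi> j. x'$j - \<gamma> * ((Pm *v x k)$j)^2)"
    define c :: real where "c = 2^(k+1) * B^(2^(k+1) - 1)"
    have vid: "\<gamma> *\<^sub>R Var k = \<gamma> *\<^sub>R (Ph *v x') + (z - x') - \<gamma> *\<^sub>R g"
      by (simp add: vec_eq_iff Var_nth z_def g_def x'_def matrix_vector_mult_diff_rdistrib algebra_simps)
    have "\<gamma> *\<^sub>R (M *v Var k) = \<gamma> *\<^sub>R (M *v (Ph *v x')) + (M *v z - M *v x') - \<gamma> *\<^sub>R (M *v g)"
      using arg_cong[OF vid, of "\<lambda>y. M *v y"]
      by (simp add: matrix_vector_mult_scaleR matrix_vector_right_distrib matrix_vector_mult_diff_distrib)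
    also have "\<gamma> *\<^sub>R (M *v (Ph *v x')) = M *v x' - x'" unfolding M_def by (rule resolvent_id[OF sPh gg g1])
    finally have "\<gamma> *\<^sub>R (M *v Var k) = M *v z - x' - \<gamma> *\<^sub>R (M *v g)" by simp
    then have "(\<gamma> *\<^sub>R (M *v Var k))$s = (M *v z - x' - \<gamma> *\<^sub>R (M *v g))$s" by simp
    then have eq: "\<gamma> * (M *v Var k)$s = (M *v z)$s - x'$s - \<gamma> * (M *v g)$s"
      by simp
    have zc: "z$j \<le> c" for j
    proof -
      define a where "a = Vbar$j"
      define p where "p = (Pm *v Vbar)$j"
      define N :: nat where "N = 2^(k+1)"
      have p0: "0 \<le> p" unfolding p_def by (rule PmVb0)
      have pN: "p^N \<le> ((Pm *v x k)$j)^2"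
      proof -
        have "p^N = (p^(2^k))^2" unfolding N_def by (simp add: power_mult[symmetric] mult.commute)
        also have "\<dots> \<le> ((Pm *v x k)$j)^2" using jensen[of j k] p0 unfolding p_def by (intro power_mono) auto
        finally show ?thesis .
      qed
      have gN: "\<gamma>^N \<le> \<gamma>" using power_decreasing[of 1 N \<gamma>] gg g1 unfolding N_def by simp
      have "(\<gamma>*p)^N = \<gamma>^N * p^N" by (simp add: power_mult_distrib)
      also have "\<dots> \<le> \<gamma> * p^N" using gN p0 by (intro mult_right_mono) auto
      also have "\<dots> \<le> \<gamma> * ((Pm *v x k)$j)^2" using pN gg by (intro mult_left_mono) auto
      finally have bN: "(\<gamma>*p)^N \<le> \<gamma> * ((Pm *v x k)$j)^2" .
      have "a^N - (\<gamma>*p)^N \<le> real N * B^(N-1)"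
        by (rule pow_gap) (use Vb0 VbB d_le p0 gg in \<open>auto simp: a_def p_def\<close>)
      moreover have "z$j = a^N - \<gamma> * ((Pm *v x k)$j)^2" unfolding z_def x'_def a_def N_def by (simp add: x_nth)
      moreover have "c = real N * B^(N-1)" unfolding c_def N_def by simp
      ultimately show ?thesis using bN by linarith
    qed
    have "(M *v z)$s \<le> \<rho> * c" using nn_const_le[OF nnM] zc by blast
    moreover have "0 \<le> x'$s" unfolding x'_def by (rule x0)
    moreover have "- (\<gamma> * (M *v g)$s) \<le> \<gamma> * (M *v (\<chi> j. \<bar>g$j\<bar>))$s"
    proof -
      have "- (M *v g)$s \<le> (M *v (\<chi> j. \<bar>g$j\<bar>))$s" using nn_abs[OF nnM, of g s] by linarith
      then show ?thesis using gg by (metis minus_mult_right mult_left_mono)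
    qed
    ultimately show ?thesis using eq unfolding c_def g_def x'_def by linarith
  qed
  define v where "v k = t * \<gamma> * (1-\<gamma>) * W k / (B+1)^(2^k)" for k
  define Q where "Q = t * sqrt (1/(B+1)) + t^2"
  have v0: "\<forall>k. 0 \<le> v k" unfolding v_def using t0 g0 g1 W0 B0 by simp
  have rec: "\<forall>k<L. v k \<le> sqrt (2^(k+1)) * Q + t * sqrt (v (Suc k))"
  proof (intro allI impI)
    fix k assume kL: "k < L"
    define X :: real where "X = (B+1)^(2^k)"
    define N :: real where "N = 2^(k+1)"
    define c :: real where "c = 2^(k+1) * B^(2^(k+1) - 1)"
    have X0: "0 < X" unfolding X_def using B0 by simp
    have X2: "X^2 = (B+1)^(2^(Suc k))" unfolding X_def by (simp add: power_mult[symmetric] mult.commute)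
    have c0: "0 \<le> c" unfolding c_def using B0 by simp
    have cle: "c \<le> N * X^2/(B+1)"
    proof -
      have "B^(2^(k+1) - 1) \<le> (B+1)^(2^(k+1) - 1)" using B0 by (intro power_mono) auto
      moreover have "(B+1)^(2^(Suc k)) = (B+1) * (B+1)^(2^(k+1) - 1)"
      proof -
        have "(2::nat)^(Suc k) = Suc (2^(k+1) - 1)" by simp
        then show ?thesis by (metis power_Suc)
      qed
      ultimately have "(B+1)^(2^(k+1) - 1) = X^2/(B+1)" and le: "B^(2^(k+1) - 1) \<le> (B+1)^(2^(k+1) - 1)"
        unfolding X2 using B0 by (simp_all add: field_simps)
      then have "c \<le> N * (X^2/(B+1))" unfolding c_def N_def
        by (metis le mult_left_mono zero_le_numeral zero_le_power)
      then show ?thesis by simp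
    qed
    obtain s where ws: "W k = (M *v S k)$s" using W_in by blast
    have W2: "(W k)^2 \<le> \<rho> * (M *v Var k)$s"
      using nn_CS[OF nnM, of "S k" s] ws S_sq[of k] by simp
    have Mg: "(M *v (\<chi> j. \<bar>((Ph - Pm) *v x (Suc k))$j\<bar>))$s \<le> t * W (Suc k) + \<rho> * (t^2 * N * X^2)"
    proof -
      have "(M *v (\<chi> j. \<bar>((Ph - Pm) *v x (Suc k))$j\<bar>))$s \<le> (M *v (\<chi> j. t * S (Suc k) $ j + t^2 * N * X^2))$s"
      proof (rule nn_mono[OF nnM], rule allI)
        fix j
        have "\<bar>((Ph - Pm) *v x (Suc k))$j\<bar> \<le> t * S (Suc k) $ j + t^2 * 2^(Suc k) * (B+1)^(2^(Suc k))"
          using hyp'[of "Suc k" j] kL by simp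
        then show "(\<chi> j. \<bar>((Ph - Pm) *v x (Suc k))$j\<bar>)$j \<le> (\<chi> j. t * S (Suc k) $ j + t^2 * N * X^2)$j"
          unfolding X2 N_def by simp
      qed
      also have "\<dots> = t * (M *v S (Suc k))$s + \<rho> * (t^2 * N * X^2)" by (rule nn_affine[OF nnM])
      also have "\<dots> \<le> t * W (Suc k) + \<rho> * (t^2 * N * X^2)" using W_ge t0 by (simp add: mult_left_mono)
      finally show ?thesis .
    qed
    have KIk: "\<gamma> * (M *v Var k)$s \<le> \<rho> * c + \<gamma> * (t * W (Suc k) + \<rho> * (t^2 * N * X^2))"
      using KI[of k s] Mg gg unfolding c_def by (smt (verit) mult_left_mono)
    have h: "(\<gamma> * W k)^2 \<le> \<gamma>/(1-\<gamma>) * (c/(1-\<gamma>) + \<gamma>*(t*W (Suc k) + t^2*N*X^2/(1-\<gamma>)))"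
    proof -
      have "(\<gamma> * W k)^2 = \<gamma>^2 * (W k)^2" by (simp add: power_mult_distrib)
      also have "\<dots> \<le> \<gamma>^2 * (\<rho> * (M *v Var k)$s)" using W2 by (intro mult_left_mono) auto
      also have "\<dots> = \<gamma> * \<rho> * (\<gamma> * (M *v Var k)$s)" by (simp add: power2_eq_square)
      also have "\<dots> \<le> \<gamma> * \<rho> * (\<rho> * c + \<gamma> * (t * W (Suc k) + \<rho> * (t^2 * N * X^2)))"
        using KIk gg rho_pos by (intro mult_left_mono) auto
      also have "\<dots> = \<gamma>/(1-\<gamma>) * (c/(1-\<gamma>) + \<gamma>*(t*W (Suc k) + t^2*N*X^2/(1-\<gamma>)))"
        unfolding \<rho>_def by simp
      finally show ?thesis .
    qed
    have N0: "0 \<le> N" unfolding N_def by simp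
    have "t*\<gamma>*(1-\<gamma>)*W k/X \<le> sqrt N * (t * sqrt(1/(B+1)) + t^2) + t * sqrt(t*\<gamma>*(1-\<gamma>)*W (Suc k)/X^2)"
      by (rule rec_alg[OF g0 g1 t0 B0 W0 W0 N0 X0 c0 cle h])
    then show "v k \<le> sqrt (2^(k+1)) * Q + t * sqrt (v (Suc k))"
      unfolding v_def Q_def N_def X2[symmetric] X_def by simp
  qed
  have vL: "v L \<le> t"
  proof -
    have SL: "S L $ j \<le> B^(2^L)" for j
    proof -
      have "Var L $ j \<le> (Pm *v x (Suc L))$j" using Var_nth[of L j] by simp
      also have "\<dots> \<le> B^(2^(Suc L))" using stoch_le_max[OF sPm] xB by blast
      also have "\<dots> = (B^(2^L))^2" by (simp add: power_mult[symmetric] mult.commute)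
      finally have "sqrt (Var L $ j) \<le> sqrt ((B^(2^L))^2)" by (rule real_sqrt_le_mono)
      then show ?thesis unfolding S_def using B0 by simp
    qed
    have WL: "W L \<le> \<rho> * B^(2^L)"
      using W_in[of L] nn_const_le[OF nnM, of "S L" "B^(2^L)"] SL by metis
    have X0: "0 < (B+1)^(2^L)" using B0 by simp
    have "v L \<le> t * \<gamma> * (1-\<gamma>) * (\<rho> * B^(2^L)) / (B+1)^(2^L)"
      unfolding v_def using WL t0 g0 g1 X0 by (intro divide_right_mono mult_left_mono) auto
    also have "\<dots> = t * \<gamma> * (B^(2^L) / (B+1)^(2^L))" unfolding \<rho>_def using g1 by simp
    also have "\<dots> \<le> t * 1 * 1"
    proof -
      have "B^(2^L) \<le> (B+1)^(2^L)" using B0 by (intro power_mono) auto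
      then have "B^(2^L) / (B+1)^(2^L) \<le> 1" using X0 by simp
      then show ?thesis using t0 g0 g1 B0 by (intro mult_mono) auto
    qed
    finally show ?thesis by simp
  qed
  have L_eq': "L = nat \<lceil>log 2 (log 2 (B + 4))\<rceil>" unfolding B_def by (rule L_eq)
  have hv: "v 0 \<le> (sqrt 2 * real L + 2) * Q"
    by (rule scalar_final[OF t0 _ _ beta_bound[OF B0 L_eq'] Q_def v0 rec vL]) (use B0 in auto)
  have he: "supnorm (Vh - V) \<le> (B+1)/(1-\<gamma>) * (v 0 + t^2)"
    unfolding supnorm_def
  proof (rule fmax_le, rule allI)
    fix s
    have "\<bar>(Vh - V)$s\<bar> = \<gamma> * \<bar>(M *v g0v)$s\<bar>" unfolding e_eq using gg by (simp add: abs_mult)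
    also have "\<dots> \<le> \<gamma> * (M *v (\<chi> j. \<bar>g0v$j\<bar>))$s" using nn_abs[OF nnM] gg by (intro mult_left_mono) auto
    also have "\<dots> \<le> \<gamma> * (M *v (\<chi> j. t * S 0 $ j + t^2 * (B+1)))$s"
    proof -
      have "(M *v (\<chi> j. \<bar>g0v$j\<bar>))$s \<le> (M *v (\<chi> j. t * S 0 $ j + t^2 * (B+1)))$s"
        by (rule nn_mono[OF nnM]) (use hyp'[of 0] x00 in \<open>simp add: g0v_def\<close>)
      then show ?thesis using gg by (intro mult_left_mono)
    qed
    also have "\<dots> = \<gamma> * (t * (M *v S 0)$s + \<rho> * (t^2 * (B+1)))" by (simp add: nn_affine[OF nnM])
    also have "\<dots> \<le> \<gamma> * (t * W 0 + \<rho> * (t^2 * (B+1)))"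
      using W_ge[of 0 s] t0 gg rho_pos by (intro mult_left_mono add_mono) auto
    also have "\<dots> \<le> (B+1)/(1-\<gamma>) * (v 0 + t^2)"
    proof -
      have gen: "\<And>a b y::real. a \<noteq> 0 \<Longrightarrow> b \<noteq> 0 \<Longrightarrow> b/a * (y*a/b) = y" by simp
      have "v 0 = (\<gamma> * t * W 0) * (1-\<gamma>) / (B+1)" unfolding v_def by (simp add: ac_simps)
      then have "(B+1)/(1-\<gamma>) * v 0 = \<gamma> * t * W 0" using gen[of "1-\<gamma>" "B+1" "\<gamma> * t * W 0"] g1 B0 by simp
      moreover have "\<gamma> * (\<rho> * (t^2 * (B+1))) \<le> (B+1)/(1-\<gamma>) * t^2"
      proof -
        have "\<gamma> * (\<rho> * (t^2 * (B+1))) \<le> 1 * (\<rho> * (t^2 * (B+1)))"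
          using g1 rho_pos B0 by (intro mult_right_mono) auto
        then show ?thesis unfolding \<rho>_def by (simp add: mult.commute)
      qed
      ultimately show ?thesis by (simp add: algebra_simps)
    qed
    finally show "\<bar>(Vh - V)$s\<bar> \<le> (B+1)/(1-\<gamma>) * (v 0 + t^2)" .
  qed
  have "supnorm (Vh - V) \<le> 4 * (real L + 1) * \<alpha> / ((1 - \<gamma>) * real n) * (B + 1)
             + 2 * (real L + 1) / (1 - \<gamma>) * sqrt (2 * \<alpha> * (B + 1) / real n)"
    by (rule final_alg[OF g0 g1 B0 a0 n0 t_def hv[unfolded Q_def] he])
  then show ?thesis unfolding Vh_def V_def B_def .
qed


end
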